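(* Let $\Omega\subseteq\mathbb{R}^n$ be open. The sets $\mathbb{G}_{bd}(\Omega)$, $\mathbb{G}_{ft}(\Omega)$, $\mathbb{G}_{nf}(\Omega)$ and $\mathbb{G}(\Omega)$ are all Dedekind order complete with respect to the inclusion order $\subseteq$, where $f\subseteq g$ means $f(x)\subseteq g(x)$ for all $x\in\Omega$.
   Context: $\overline{\mathbb{R}}=\mathbb{R}\cup\{\pm\infty\}$, $\mathbb{I}\overline{\mathbb{R}}$ is the set of closed intervals $[\underline a,\overline a]$ with $\underline a\le\overline a$ in $\overline{\mathbb{R}}$, $a\in\overline{\mathbb{R}}$ identified with $[a,a]$. $\mathbb{A}(X)$ is the set of functions $X\to\mathbb{I}\overline{\mathbb{R}}$. $B_\delta(x)=\{y\in\Omega:\|x-y\|<\delta\}$. For dense $D\subseteq\Omega$ and $f\in\mathbb{A}(D)$: $I(D,\Omega,f)(x)=\sup_{\delta>0}\inf\{z\in f(y):y\in B_\delta(x)\cap D\}$, $S(D,\Omega,f)(x)=\inf_{\delta>0}\sup\{z\in f(y):y\in B_\delta(x)\cap D\}$, $F(D,\Omega,f)(x)=[I(D,\Omega,f)(x),S(D,\Omega,f)(x)]$. $f\in\mathbb{A}(\Omega)$ is D-continuous if $F(D,\Omega,f)=f$ for every dense $D\subseteq\Omega$; $\mathbb{G}(\Omega)$ is the set of D-continuous functions, and $\mathbb{G}_{bd}(\Omega)$, $\mathbb{G}_{ft}(\Omega)$, $\mathbb{G}_{nf}(\Omega)$ are its subsets of bounded, finite and nearly finite functions: $f$ is bounded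 if there is $M\in\mathbb{R}$ with $f(x)\subseteq[-M,M]$ for all $x$; finite if both endpoints of $f(x)$ are real for all $x$; nearly finite if there is an open dense $D\subseteq\Omega$ on which $f$ is finite. A poset is Dedekind order complete if every nonempty subset bounded above has a supremum in it and every nonempty subset bounded below has an infimum in it. *)

theory Defs
  imports "HOL-Analysis.Analysis" "HOL-Library.Extended_Real"
begin

definition IRbar :: "ereal set set" where
  "IRbar = {{a..b} | a b. a \<le> b}"

text \<open>A(Omega): interval-valued functions on Omega; outside Omega the value is fixed to the empty set
  so that functions are determined by their values on Omega.\<close>
definition Afun :: "'a set \<Rightarrow> ('a \<Rightarrow> ereal set) set" where
  "Afun \<Omega> = {f. (\<forall>x\<in>\<Omega>. f x \<in> IRbar) \<and> (\<forall>x. x \<notin> \<Omega> \<longrightarrow> f x = {})}"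

definition denseIn :: "'a::topological_space set \<Rightarrow> 'a set \<Rightarrow> bool" where
  "denseIn D \<Omega> \<longleftrightarrow> D \<subseteq> \<Omega> \<and> \<Omega> \<subseteq> closure D"

definition Bd :: "'a::real_normed_vector set \<Rightarrow> real \<Rightarrow> 'a \<Rightarrow> 'a set" where
  "Bd \<Omega> \<delta> x = {y \<in> \<Omega>. norm (x - y) < \<delta>}"

definition Ilow :: "'a::real_normed_vector set \<Rightarrow> 'a set \<Rightarrow> ('a \<Rightarrow> ereal set) \<Rightarrow> 'a \<Rightarrow> ereal" where
  "Ilow D \<Omega> f x = (SUP \<delta>\<in>{0<..}. Inf {z. \<exists>y \<in> Bd \<Omega> \<delta> x \<inter> D. z \<in> f y})"

definition Supp :: "'a::real_normed_vector set \<Rightarrow> 'a set \<Rightarrow> ('a \<Rightarrow> ereal set) \<Rightarrow> 'a \<Rightarrow> ereal" where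
  "Supp D \<Omega> f x = (INF \<delta>\<in>{0<..}. Sup {z. \<exists>y \<in> Bd \<Omega> \<delta> x \<inter> D. z \<in> f y})"

definition Fenv :: "'a::real_normed_vector set \<Rightarrow> 'a set \<Rightarrow> ('a \<Rightarrow> ereal set) \<Rightarrow> 'a \<Rightarrow> ereal set" where
  "Fenv D \<Omega> f x = {Ilow D \<Omega> f x .. Supp D \<Omega> f x}"

definition D_continuous :: "'a::real_normed_vector set \<Rightarrow> ('a \<Rightarrow> ereal set) \<Rightarrow> bool" where
  "D_continuous \<Omega> f \<longleftrightarrow> (\<forall>D. denseIn D \<Omega> \<longrightarrow> (\<forall>x\<in>\<Omega>. Fenv D \<Omega> f x = f x))"

definition Gset :: "'a::real_normed_vector set \<Rightarrow> ('a \<Rightarrow> ereal set) set" where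
  "Gset \<Omega> = {f \<in> Afun \<Omega>. D_continuous \<Omega> f}"

definition bounded_ifun :: "'a set \<Rightarrow> ('a \<Rightarrow> ereal set) \<Rightarrow> bool" where
  "bounded_ifun \<Omega> f \<longleftrightarrow> (\<exists>M::real. \<forall>x\<in>\<Omega>. f x \<subseteq> {ereal (-M) .. ereal M})"

definition finite_ifun :: "'a set \<Rightarrow> ('a \<Rightarrow> ereal set) \<Rightarrow> bool" where
  "finite_ifun \<Omega> f \<longleftrightarrow> (\<forall>x\<in>\<Omega>. \<exists>a b::real. a \<le> b \<and> f x = {ereal a .. ereal b})"

definition nearly_finite_ifun :: "'a::topological_space set \<Rightarrow> ('a \<Rightarrow> ereal set) \<Rightarrow> bool" where
  "nearly_finite_ifun \<Omega> f \<longleftrightarrow> (\<exists>D. open D \<and> denseIn D \<Omega> \<and> finite_ifun D f)"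

definition Gbd :: "'a::real_normed_vector set \<Rightarrow> ('a \<Rightarrow> ereal set) set" where
  "Gbd \<Omega> = {f \<in> Gset \<Omega>. bounded_ifun \<Omega> f}"

definition Gft :: "'a::real_normed_vector set \<Rightarrow> ('a \<Rightarrow> ereal set) set" where
  "Gft \<Omega> = {f \<in> Gset \<Omega>. finite_ifun \<Omega> f}"

definition Gnf :: "'a::real_normed_vector set \<Rightarrow> ('a \<Rightarrow> ereal set) set" where
  "Gnf \<Omega> = {f \<in> Gset \<Omega>. nearly_finite_ifun \<Omega> f}"

definition incl :: "'a set \<Rightarrow> ('a \<Rightarrow> ereal set) \<Rightarrow> ('a \<Rightarrow> ereal set) \<Rightarrow> bool" where
  "incl \<Omega> f g \<longleftrightarrow> (\<forall>x\<in>\<Omega>. f x \<subseteq> g x)"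

definition is_sup_in :: "'b set \<Rightarrow> ('b \<Rightarrow> 'b \<Rightarrow> bool) \<Rightarrow> 'b set \<Rightarrow> 'b \<Rightarrow> bool" where
  "is_sup_in S le A s \<longleftrightarrow> s \<in> S \<and> (\<forall>a\<in>A. le a s) \<and> (\<forall>u\<in>S. (\<forall>a\<in>A. le a u) \<longrightarrow> le s u)"

definition is_inf_in :: "'b set \<Rightarrow> ('b \<Rightarrow> 'b \<Rightarrow> bool) \<Rightarrow> 'b set \<Rightarrow> 'b \<Rightarrow> bool" where
  "is_inf_in S le A s \<longleftrightarrow> s \<in> S \<and> (\<forall>a\<in>A. le s a) \<and> (\<forall>u\<in>S. (\<forall>a\<in>A. le u a) \<longrightarrow> le u s)"

definition dedekind_complete :: "'b set \<Rightarrow> ('b \<Rightarrow> 'b \<Rightarrow> bool) \<Rightarrow> bool" where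
  "dedekind_complete S le \<longleftrightarrow>
     (\<forall>A. A \<subseteq> S \<and> A \<noteq> {} \<and> (\<exists>u\<in>S. \<forall>a\<in>A. le a u) \<longrightarrow> (\<exists>s. is_sup_in S le A s)) \<and>
     (\<forall>A. A \<subseteq> S \<and> A \<noteq> {} \<and> (\<exists>l\<in>S. \<forall>a\<in>A. le l a) \<longrightarrow> (\<exists>s. is_inf_in S le A s))"

end

theory Submission
  imports Defs
begin

definition lo :: "'a::real_normed_vector set \<Rightarrow> 'a set \<Rightarrow> ('a \<Rightarrow> ereal) \<Rightarrow> 'a \<Rightarrow> ereal" where
  "lo \<Omega> D \<phi> x = (SUP \<delta>\<in>{0<..}. INF y\<in>Bd \<Omega> \<delta> x \<inter> D. \<phi> y)"
definition hi :: "'a::real_normed_vector set \<Rightarrow> 'a set \<Rightarrow> ('a \<Rightarrow> ereal) \<Rightarrow> 'a \<Rightarrow> ereal" where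
  "hi \<Omega> D \<phi> x = (INF \<delta>\<in>{0<..}. SUP y\<in>Bd \<Omega> \<delta> x \<inter> D. \<phi> y)"
definition Lset :: "'a::real_normed_vector set \<Rightarrow> ('a \<Rightarrow> ereal) set" where
  "Lset \<Omega> = {a. \<forall>D. denseIn D \<Omega> \<longrightarrow> (\<forall>x\<in>\<Omega>. lo \<Omega> D a x = a x)}"
definition Uset :: "'a::real_normed_vector set \<Rightarrow> ('a \<Rightarrow> ereal) set" where
  "Uset \<Omega> = {a. \<forall>D. denseIn D \<Omega> \<longrightarrow> (\<forall>x\<in>\<Omega>. hi \<Omega> D a x = a x)}"

lemma self_in_Bd: "x \<in> \<Omega> \<Longrightarrow> \<delta> > 0 \<Longrightarrow> x \<in> Bd \<Omega> \<delta> x"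
  by (simp add: Bd_def)

lemma lo_le_self: "x \<in> \<Omega> \<Longrightarrow> x \<in> D \<Longrightarrow> lo \<Omega> D \<phi> x \<le> \<phi> x"
  unfolding lo_def by (rule SUP_least) (auto intro!: INF_lower simp: Bd_def)

lemma hi_ge_self: "x \<in> \<Omega> \<Longrightarrow> x \<in> D \<Longrightarrow> \<phi> x \<le> hi \<Omega> D \<phi> x"
  unfolding hi_def by (rule INF_greatest) (auto intro!: SUP_upper simp: Bd_def)

lemma lo_mono: "(\<And>y. y \<in> \<Omega> \<Longrightarrow> \<phi> y \<le> \<psi> y) \<Longrightarrow> lo \<Omega> D \<phi> x \<le> lo \<Omega> D \<psi> x"
  unfolding lo_def apply (rule SUP_mono) subgoal for d apply (rule bexI[of _ d]) apply (rule INF_mono) by (auto simp: Bd_def) done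

lemma hi_mono: "(\<And>y. y \<in> \<Omega> \<Longrightarrow> \<phi> y \<le> \<psi> y) \<Longrightarrow> hi \<Omega> D \<phi> x \<le> hi \<Omega> D \<psi> x"
  unfolding hi_def apply (rule INF_mono) subgoal for d apply (rule bexI[of _ d]) apply (rule SUP_mono) by (auto simp: Bd_def) done

lemma lo_cong: "(\<And>y. y \<in> \<Omega> \<Longrightarrow> \<phi> y = \<psi> y) \<Longrightarrow> lo \<Omega> D \<phi> x = lo \<Omega> D \<psi> x"
  by (intro antisym lo_mono) simp_all

lemma hi_cong: "(\<And>y. y \<in> \<Omega> \<Longrightarrow> \<phi> y = \<psi> y) \<Longrightarrow> hi \<Omega> D \<phi> x = hi \<Omega> D \<psi> x"
  by (intro antisym hi_mono) simp_all

lemma denseIn_self: "denseIn \<Omega> \<Omega>"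
  by (simp add: denseIn_def closure_subset)

lemma lo_lsc:
  assumes x: "x \<in> \<Omega>"
  shows "lo \<Omega> \<Omega> \<psi> x \<le> lo \<Omega> D (lo \<Omega> \<Omega> \<psi>) x"
  unfolding lo_def[of \<Omega> \<Omega> \<psi> x]
proof (rule SUP_least)
  fix \<delta> :: real assume d: "\<delta> \<in> {0<..}"
  let ?m = "INF y\<in>Bd \<Omega> \<delta> x \<inter> \<Omega>. \<psi> y"
  have "?m \<le> (INF y\<in>Bd \<Omega> (\<delta>/2) x \<inter> D. lo \<Omega> \<Omega> \<psi> y)"
  proof (rule INF_greatest)
    fix y assume y: "y \<in> Bd \<Omega> (\<delta>/2) x \<inter> D"
    have "?m \<le> (INF z\<in>Bd \<Omega> (\<delta>/2) y \<inter> \<Omega>. \<psi> z)"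
    proof (rule INF_mono)
      fix z assume z: "z \<in> Bd \<Omega> (\<delta>/2) y \<inter> \<Omega>"
      have "norm (x - z) \<le> norm (x - y) + norm (y - z)"
        by (metis diff_add_cancel add_diff_eq norm_triangle_ineq)
      then have "z \<in> Bd \<Omega> \<delta> x \<inter> \<Omega>" using y z by (auto simp: Bd_def)
      then show "\<exists>m\<in>Bd \<Omega> \<delta> x \<inter> \<Omega>. \<psi> m \<le> \<psi> z" by blast
    qed
    also have "\<dots> \<le> lo \<Omega> \<Omega> \<psi> y" unfolding lo_def
      by (rule SUP_upper) (use d in auto)
    finally show "?m \<le> lo \<Omega> \<Omega> \<psi> y" .
  qed
  also have "\<dots> \<le> lo \<Omega> D (lo \<Omega> \<Omega> \<psi>) x" unfolding lo_def[of \<Omega> D]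
    by (rule SUP_upper) (use d in auto)
  finally show "?m \<le> lo \<Omega> D (lo \<Omega> \<Omega> \<psi>) x" .
qed

lemma IS_in_L: "(lo \<Omega> \<Omega> (hi \<Omega> \<Omega> \<phi>)) \<in> Lset \<Omega>"
  unfolding Lset_def
proof (intro CollectI allI impI ballI)
  fix D x assume dD: "denseIn D \<Omega>" and x: "x \<in> \<Omega>"
  let ?\<psi> = "hi \<Omega> \<Omega> \<phi>"
  let ?s = "lo \<Omega> \<Omega> ?\<psi>"
  have DO: "D \<subseteq> \<Omega>" and cl: "\<Omega> \<subseteq> closure D" using dD by (auto simp: denseIn_def)
  have "lo \<Omega> D ?s x \<le> ?s x"
    unfolding lo_def[of \<Omega> D]
  proof (rule SUP_least)
    fix \<delta> :: real assume d: "\<delta> \<in> {0<..}"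
    show "(INF y\<in>Bd \<Omega> \<delta> x \<inter> D. ?s y) \<le> ?s x"
    proof (rule ccontr)
      assume "\<not> ?thesis"
      then have "?s x < (INF y\<in>Bd \<Omega> \<delta> x \<inter> D. ?s y)" by simp
      then obtain t where t1: "?s x < t" and t2: "t < (INF y\<in>Bd \<Omega> \<delta> x \<inter> D. ?s y)"
        using dense by blast
      have "(INF y\<in>Bd \<Omega> (\<delta>/2) x \<inter> \<Omega>. ?\<psi> y) \<le> ?s x"
        unfolding lo_def[of \<Omega> \<Omega> ?\<psi>] by (rule SUP_upper) (use d in auto)
      then have "(INF y\<in>Bd \<Omega> (\<delta>/2) x \<inter> \<Omega>. ?\<psi> y) < t" using t1 by simp
      then obtain y0 where y0: "y0 \<in> Bd \<Omega> (\<delta>/2) x \<inter> \<Omega>" and py0: "?\<psi> y0 < t"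
        by (auto simp: INF_less_iff)
      then obtain \<eta> where eta: "\<eta> > 0" and se: "(SUP y\<in>Bd \<Omega> \<eta> y0 \<inter> \<Omega>. \<phi> y) < t"
        unfolding hi_def by (auto simp: INF_less_iff)
      define r where "r = min \<eta> (\<delta>/2)"
      have r: "r > 0" using eta d by (auto simp: r_def)
      have "y0 \<in> closure D" using y0 cl by auto
      then obtain z where zD: "z \<in> D" and dz: "dist z y0 < r/2"
        using r unfolding closure_approachable by (metis half_gt_zero)
      have zO: "z \<in> \<Omega>" using zD DO by auto
      have "?s z \<le> ?\<psi> z" by (rule lo_le_self[OF zO zO])
      also have "\<dots> \<le> (SUP y\<in>Bd \<Omega> (r/2) z \<inter> \<Omega>. \<phi> y)"
        unfolding hi_def by (rule INF_lower) (use r in auto)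
      also have "\<dots> \<le> (SUP y\<in>Bd \<Omega> \<eta> y0 \<inter> \<Omega>. \<phi> y)"
      proof (rule SUP_subset_mono)
        show "Bd \<Omega> (r/2) z \<inter> \<Omega> \<subseteq> Bd \<Omega> \<eta> y0 \<inter> \<Omega>"
        proof
          fix w assume w: "w \<in> Bd \<Omega> (r/2) z \<inter> \<Omega>"
          have "norm (y0 - w) \<le> norm (y0 - z) + norm (z - w)"
            by (metis diff_add_cancel add_diff_eq norm_triangle_ineq)
          moreover have "norm (y0 - z) < r/2" using dz by (simp add: dist_norm norm_minus_commute)
          ultimately show "w \<in> Bd \<Omega> \<eta> y0 \<inter> \<Omega>" using w by (auto simp: Bd_def r_def)
        qed
      qed simp
      also have "\<dots> < t" by (rule se)
      finally have sz: "?s z < t" .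
      have "norm (x - z) \<le> norm (x - y0) + norm (y0 - z)"
        by (metis diff_add_cancel add_diff_eq norm_triangle_ineq)
      moreover have "norm (y0 - z) < r/2" using dz by (simp add: dist_norm norm_minus_commute)
      moreover have "norm (x - y0) < \<delta>/2" using y0 by (auto simp: Bd_def)
      moreover have "r/2 \<le> \<delta>/4" by (simp add: r_def)
      ultimately have "norm (x - z) < \<delta>" using d by simp
      then have "z \<in> Bd \<Omega> \<delta> x \<inter> D" using zD zO by (auto simp: Bd_def)
      then have "(INF y\<in>Bd \<Omega> \<delta> x \<inter> D. ?s y) \<le> ?s z" by (rule INF_lower)
      then show False using t2 sz by simp
    qed
  qed
  moreover have "?s x \<le> lo \<Omega> D ?s x" by (rule lo_lsc[OF x])
  ultimately show "lo \<Omega> D ?s x = ?s x" by simp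
qed

lemma L_normal:
  assumes a: "a \<in> Lset \<Omega>" and x: "x \<in> \<Omega>"
  shows "lo \<Omega> \<Omega> (hi \<Omega> \<Omega> a) x = a x"
proof (rule antisym)
  have I: "\<And>y. y \<in> \<Omega> \<Longrightarrow> lo \<Omega> \<Omega> a y = a y" using a denseIn_self by (auto simp: Lset_def)
  have "a x = lo \<Omega> \<Omega> a x" using I x by simp
  also have "\<dots> \<le> lo \<Omega> \<Omega> (hi \<Omega> \<Omega> a) x" by (rule lo_mono) (rule hi_ge_self, auto)
  finally show "a x \<le> lo \<Omega> \<Omega> (hi \<Omega> \<Omega> a) x" .
  show "lo \<Omega> \<Omega> (hi \<Omega> \<Omega> a) x \<le> a x"
  proof (rule ccontr)
    assume "\<not> ?thesis"
    then obtain t where t1: "a x < t" and t2: "t < lo \<Omega> \<Omega> (hi \<Omega> \<Omega> a) x"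
      using dense by (metis not_le)
    then obtain \<delta> where d: "\<delta> > 0" and tI: "t < (INF y\<in>Bd \<Omega> \<delta> x \<inter> \<Omega>. hi \<Omega> \<Omega> a y)"
      unfolding lo_def by (auto simp: less_SUP_iff)
    define D where "D = \<Omega> - {y \<in> Bd \<Omega> \<delta> x. a y < t}"
    have "denseIn D \<Omega>"
      unfolding denseIn_def
    proof
      show "D \<subseteq> \<Omega>" by (auto simp: D_def)
      show "\<Omega> \<subseteq> closure D"
      proof
        fix w assume w: "w \<in> \<Omega>"
        show "w \<in> closure D" unfolding closure_approachable
        proof (intro allI impI)
          fix e :: real assume e: "e > 0"
          show "\<exists>z\<in>D. dist z w < e"
          proof (cases "w \<in> D")
            case True then show ?thesis using e by (intro bexI[of _ w]) auto
          next
            case False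
            then have wB: "w \<in> Bd \<Omega> \<delta> x \<inter> \<Omega>" using w by (auto simp: D_def)
            then have "t < hi \<Omega> \<Omega> a w" using tI by (meson INF_lower order_less_le_trans)
            moreover have "hi \<Omega> \<Omega> a w \<le> (SUP y\<in>Bd \<Omega> e w \<inter> \<Omega>. a y)"
              unfolding hi_def using e by (auto intro: INF_lower)
            ultimately have "t < (SUP y\<in>Bd \<Omega> e w \<inter> \<Omega>. a y)" by simp
            then obtain z where z: "z \<in> Bd \<Omega> e w \<inter> \<Omega>" and tz: "t < a z"
              by (auto simp: less_SUP_iff)
            have "z \<in> D" using z tz by (auto simp: D_def)
            moreover have "dist z w < e" using z by (auto simp: Bd_def dist_norm norm_minus_commute)
            ultimately show ?thesis by blast
          qed
        qed
      qed
    qed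
    then have "lo \<Omega> D a x = a x" using a x by (auto simp: Lset_def)
    moreover have "t \<le> (INF y\<in>Bd \<Omega> \<delta> x \<inter> D. a y)"
      by (rule INF_greatest) (auto simp: D_def)
    moreover have "(INF y\<in>Bd \<Omega> \<delta> x \<inter> D. a y) \<le> lo \<Omega> D a x"
      unfolding lo_def by (rule SUP_upper) (use d in auto)
    ultimately show False using t1 by simp
  qed
qed


lemma hi_neg: "hi \<Omega> D b x = - lo \<Omega> D (\<lambda>y. - b y) x"
  unfolding lo_def hi_def by (simp add: ereal_INF_uminus_eq ereal_SUP_uminus_eq)

lemma U_iff: "b \<in> Uset \<Omega> \<longleftrightarrow> (\<lambda>y. - b y) \<in> Lset \<Omega>"
proof -
  have e: "\<And>D x. (hi \<Omega> D b x = b x) \<longleftrightarrow> (lo \<Omega> D (\<lambda>y. - b y) x = - b x)"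
    unfolding hi_neg by (rule ereal_uminus_eq_reorder)
  show ?thesis by (simp add: Uset_def Lset_def e)
qed

lemma L_D_Omega: "a \<in> Lset \<Omega> \<Longrightarrow> x \<in> \<Omega> \<Longrightarrow> lo \<Omega> \<Omega> a x = a x"
  using denseIn_self by (auto simp: Lset_def)

lemma L_cong: "a \<in> Lset \<Omega> \<Longrightarrow> (\<And>x. x \<in> \<Omega> \<Longrightarrow> a x = a' x) \<Longrightarrow> a' \<in> Lset \<Omega>"
  unfolding Lset_def using lo_cong[of \<Omega> a a'] by auto

lemma U_cong: "a \<in> Uset \<Omega> \<Longrightarrow> (\<And>x. x \<in> \<Omega> \<Longrightarrow> a x = a' x) \<Longrightarrow> a' \<in> Uset \<Omega>"
  unfolding Uset_def using hi_cong[of \<Omega> a a'] by auto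

lemma L_sup:
  assumes "A \<subseteq> Lset \<Omega>"
  shows "\<exists>s\<in>Lset \<Omega>. (\<forall>a\<in>A. \<forall>x\<in>\<Omega>. a x \<le> s x) \<and>
           (\<forall>v\<in>Lset \<Omega>. (\<forall>a\<in>A. \<forall>x\<in>\<Omega>. a x \<le> v x) \<longrightarrow> (\<forall>x\<in>\<Omega>. s x \<le> v x))"
proof (intro bexI conjI ballI impI)
  let ?h = "\<lambda>x. SUP a\<in>A. a x"
  let ?s = "lo \<Omega> \<Omega> (hi \<Omega> \<Omega> ?h)"
  show "?s \<in> Lset \<Omega>" by (rule IS_in_L)
  fix a x assume a: "a \<in> A" and x: "x \<in> \<Omega>"
  have "a x = lo \<Omega> \<Omega> (hi \<Omega> \<Omega> a) x" using L_normal[of a \<Omega> x] a x assms by auto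
  also have "\<dots> \<le> ?s x"
    by (intro lo_mono hi_mono) (use a in \<open>auto intro: SUP_upper\<close>)
  finally show "a x \<le> ?s x" .
next
  let ?h = "\<lambda>x. SUP a\<in>A. a x"
  let ?s = "lo \<Omega> \<Omega> (hi \<Omega> \<Omega> ?h)"
  fix v x assume v: "v \<in> Lset \<Omega>" and ub: "\<forall>a\<in>A. \<forall>x\<in>\<Omega>. a x \<le> v x" and x: "x \<in> \<Omega>"
  have "?s x \<le> lo \<Omega> \<Omega> (hi \<Omega> \<Omega> v) x"
    by (intro lo_mono hi_mono) (use ub in \<open>auto intro: SUP_least\<close>)
  also have "\<dots> = v x" using L_normal[OF v x] .
  finally show "?s x \<le> v x" .
qed

lemma L_inf:
  assumes "A \<subseteq> Lset \<Omega>"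
  shows "\<exists>s\<in>Lset \<Omega>. (\<forall>a\<in>A. \<forall>x\<in>\<Omega>. s x \<le> a x) \<and>
           (\<forall>v\<in>Lset \<Omega>. (\<forall>a\<in>A. \<forall>x\<in>\<Omega>. v x \<le> a x) \<longrightarrow> (\<forall>x\<in>\<Omega>. v x \<le> s x))"
proof (intro bexI conjI ballI impI)
  let ?g = "lo \<Omega> \<Omega> (\<lambda>x. INF a\<in>A. a x)"
  let ?s = "lo \<Omega> \<Omega> (hi \<Omega> \<Omega> ?g)"
  show "?s \<in> Lset \<Omega>" by (rule IS_in_L)
  fix a x assume a: "a \<in> A" and x: "x \<in> \<Omega>"
  have aL: "a \<in> Lset \<Omega>" using a assms by auto
  have "?s x \<le> lo \<Omega> \<Omega> (hi \<Omega> \<Omega> a) x"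
  proof (intro lo_mono hi_mono)
    fix y assume y: "y \<in> \<Omega>"
    have "?g y \<le> lo \<Omega> \<Omega> a y" by (rule lo_mono) (use a in \<open>auto intro: INF_lower\<close>)
    also have "\<dots> = a y" using L_D_Omega[OF aL y] .
    finally show "?g y \<le> a y" .
  qed
  also have "\<dots> = a x" using L_normal[OF aL x] .
  finally show "?s x \<le> a x" .
next
  let ?g = "lo \<Omega> \<Omega> (\<lambda>x. INF a\<in>A. a x)"
  let ?s = "lo \<Omega> \<Omega> (hi \<Omega> \<Omega> ?g)"
  fix v x assume v: "v \<in> Lset \<Omega>" and lb: "\<forall>a\<in>A. \<forall>x\<in>\<Omega>. v x \<le> a x" and x: "x \<in> \<Omega>"
  have "v x = lo \<Omega> \<Omega> (hi \<Omega> \<Omega> v) x" using L_normal[OF v x] by simp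
  also have "\<dots> \<le> ?s x"
  proof (intro lo_mono hi_mono)
    fix y assume y: "y \<in> \<Omega>"
    have "v y = lo \<Omega> \<Omega> v y" using L_D_Omega[OF v y] by simp
    also have "\<dots> \<le> ?g y" by (rule lo_mono) (use lb in \<open>auto intro: INF_greatest\<close>)
    finally show "v y \<le> ?g y" .
  qed
  finally show "v x \<le> ?s x" .
qed

lemma U_sup:
  assumes "A \<subseteq> Uset \<Omega>"
  shows "\<exists>s\<in>Uset \<Omega>. (\<forall>a\<in>A. \<forall>x\<in>\<Omega>. a x \<le> s x) \<and>
           (\<forall>v\<in>Uset \<Omega>. (\<forall>a\<in>A. \<forall>x\<in>\<Omega>. a x \<le> v x) \<longrightarrow> (\<forall>x\<in>\<Omega>. s x \<le> v x))"
proof -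
  let ?N = "\<lambda>a::'a \<Rightarrow> ereal. \<lambda>y. - a y"
  have "?N ` A \<subseteq> Lset \<Omega>" using assms U_iff by auto
  from L_inf[OF this] obtain s where s: "s \<in> Lset \<Omega>"
    and lb: "\<forall>a\<in>?N ` A. \<forall>x\<in>\<Omega>. s x \<le> a x"
    and gr: "\<forall>v\<in>Lset \<Omega>. (\<forall>a\<in>?N ` A. \<forall>x\<in>\<Omega>. v x \<le> a x) \<longrightarrow> (\<forall>x\<in>\<Omega>. v x \<le> s x)" by blast
  show ?thesis
  proof (intro bexI[of _ "?N s"] conjI ballI impI)
    show "?N s \<in> Uset \<Omega>" using s U_iff[of "?N s"] by simp
    fix a x assume "a \<in> A" "x \<in> \<Omega>"
    then have "s x \<le> - a x" using lb by auto
    then show "a x \<le> - s x" by (metis ereal_minus_le_minus ereal_uminus_uminus)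
  next
    fix v x assume v: "v \<in> Uset \<Omega>" and ub: "\<forall>a\<in>A. \<forall>x\<in>\<Omega>. a x \<le> v x" and x: "x \<in> \<Omega>"
    have "?N v \<in> Lset \<Omega>" using v U_iff by auto
    moreover have "\<forall>a\<in>?N ` A. \<forall>x\<in>\<Omega>. ?N v x \<le> a x" using ub by auto
    ultimately have "- v x \<le> s x" using gr x by auto
    then show "- s x \<le> v x" by (metis ereal_minus_le_minus ereal_uminus_uminus)
  qed
qed

lemma U_inf:
  assumes "A \<subseteq> Uset \<Omega>"
  shows "\<exists>s\<in>Uset \<Omega>. (\<forall>a\<in>A. \<forall>x\<in>\<Omega>. s x \<le> a x) \<and>
           (\<forall>v\<in>Uset \<Omega>. (\<forall>a\<in>A. \<forall>x\<in>\<Omega>. v x \<le> a x) \<longrightarrow> (\<forall>x\<in>\<Omega>. v x \<le> s x))"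
proof -
  let ?N = "\<lambda>a::'a \<Rightarrow> ereal. \<lambda>y. - a y"
  have "?N ` A \<subseteq> Lset \<Omega>" using assms U_iff by auto
  from L_sup[OF this] obtain s where s: "s \<in> Lset \<Omega>"
    and ub: "\<forall>a\<in>?N ` A. \<forall>x\<in>\<Omega>. a x \<le> s x"
    and le: "\<forall>v\<in>Lset \<Omega>. (\<forall>a\<in>?N ` A. \<forall>x\<in>\<Omega>. a x \<le> v x) \<longrightarrow> (\<forall>x\<in>\<Omega>. s x \<le> v x)" by blast
  show ?thesis
  proof (intro bexI[of _ "?N s"] conjI ballI impI)
    show "?N s \<in> Uset \<Omega>" using s U_iff[of "?N s"] by simp
    fix a x assume "a \<in> A" "x \<in> \<Omega>"
    then have "- a x \<le> s x" using ub by auto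
    then show "- s x \<le> a x" by (metis ereal_minus_le_minus ereal_uminus_uminus)
  next
    fix v x assume v: "v \<in> Uset \<Omega>" and lb: "\<forall>a\<in>A. \<forall>x\<in>\<Omega>. v x \<le> a x" and x: "x \<in> \<Omega>"
    have "?N v \<in> Lset \<Omega>" using v U_iff by auto
    moreover have "\<forall>a\<in>?N ` A. \<forall>x\<in>\<Omega>. a x \<le> ?N v x" using lb by auto
    ultimately have "s x \<le> - v x" using le x by auto
    then show "v x \<le> - s x" by (metis ereal_minus_le_minus ereal_uminus_uminus)
  qed
qed

lemma L_inf_img:
  assumes "\<And>a. a \<in> A \<Longrightarrow> F a \<in> Lset \<Omega>"
  obtains s where "s \<in> Lset \<Omega>" "\<And>a x. a \<in> A \<Longrightarrow> x \<in> \<Omega> \<Longrightarrow> s x \<le> F a x"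
    "\<And>v x. v \<in> Lset \<Omega> \<Longrightarrow> (\<And>a x. a \<in> A \<Longrightarrow> x \<in> \<Omega> \<Longrightarrow> v x \<le> F a x) \<Longrightarrow> x \<in> \<Omega> \<Longrightarrow> v x \<le> s x"
proof -
  have "F ` A \<subseteq> Lset \<Omega>" using assms by blast
  from L_inf[OF this] obtain s where "s \<in> Lset \<Omega>" "\<forall>a\<in>F ` A. \<forall>x\<in>\<Omega>. s x \<le> a x"
    "\<forall>v\<in>Lset \<Omega>. (\<forall>a\<in>F ` A. \<forall>x\<in>\<Omega>. v x \<le> a x) \<longrightarrow> (\<forall>x\<in>\<Omega>. v x \<le> s x)"
    by (elim bexE conjE)
  then show ?thesis using that by (simp add: ball_simps)
qed

lemma L_sup_img:
  assumes "\<And>a. a \<in> A \<Longrightarrow> F a \<in> Lset \<Omega>"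
  obtains s where "s \<in> Lset \<Omega>" "\<And>a x. a \<in> A \<Longrightarrow> x \<in> \<Omega> \<Longrightarrow> F a x \<le> s x"
    "\<And>v x. v \<in> Lset \<Omega> \<Longrightarrow> (\<And>a x. a \<in> A \<Longrightarrow> x \<in> \<Omega> \<Longrightarrow> F a x \<le> v x) \<Longrightarrow> x \<in> \<Omega> \<Longrightarrow> s x \<le> v x"
proof -
  have "F ` A \<subseteq> Lset \<Omega>" using assms by blast
  from L_sup[OF this] obtain s where "s \<in> Lset \<Omega>" "\<forall>a\<in>F ` A. \<forall>x\<in>\<Omega>. a x \<le> s x"
    "\<forall>v\<in>Lset \<Omega>. (\<forall>a\<in>F ` A. \<forall>x\<in>\<Omega>. a x \<le> v x) \<longrightarrow> (\<forall>x\<in>\<Omega>. s x \<le> v x)"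
    by (elim bexE conjE)
  then show ?thesis using that by (simp add: ball_simps)
qed

lemma U_inf_img:
  assumes "\<And>a. a \<in> A \<Longrightarrow> F a \<in> Uset \<Omega>"
  obtains s where "s \<in> Uset \<Omega>" "\<And>a x. a \<in> A \<Longrightarrow> x \<in> \<Omega> \<Longrightarrow> s x \<le> F a x"
    "\<And>v x. v \<in> Uset \<Omega> \<Longrightarrow> (\<And>a x. a \<in> A \<Longrightarrow> x \<in> \<Omega> \<Longrightarrow> v x \<le> F a x) \<Longrightarrow> x \<in> \<Omega> \<Longrightarrow> v x \<le> s x"
proof -
  have "F ` A \<subseteq> Uset \<Omega>" using assms by blast
  from U_inf[OF this] obtain s where "s \<in> Uset \<Omega>" "\<forall>a\<in>F ` A. \<forall>x\<in>\<Omega>. s x \<le> a x"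
    "\<forall>v\<in>Uset \<Omega>. (\<forall>a\<in>F ` A. \<forall>x\<in>\<Omega>. v x \<le> a x) \<longrightarrow> (\<forall>x\<in>\<Omega>. v x \<le> s x)"
    by (elim bexE conjE)
  then show ?thesis using that by (simp add: ball_simps)
qed

lemma U_sup_img:
  assumes "\<And>a. a \<in> A \<Longrightarrow> F a \<in> Uset \<Omega>"
  obtains s where "s \<in> Uset \<Omega>" "\<And>a x. a \<in> A \<Longrightarrow> x \<in> \<Omega> \<Longrightarrow> F a x \<le> s x"
    "\<And>v x. v \<in> Uset \<Omega> \<Longrightarrow> (\<And>a x. a \<in> A \<Longrightarrow> x \<in> \<Omega> \<Longrightarrow> F a x \<le> v x) \<Longrightarrow> x \<in> \<Omega> \<Longrightarrow> s x \<le> v x"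
proof -
  have "F ` A \<subseteq> Uset \<Omega>" using assms by blast
  from U_sup[OF this] obtain s where "s \<in> Uset \<Omega>" "\<forall>a\<in>F ` A. \<forall>x\<in>\<Omega>. a x \<le> s x"
    "\<forall>v\<in>Uset \<Omega>. (\<forall>a\<in>F ` A. \<forall>x\<in>\<Omega>. a x \<le> v x) \<longrightarrow> (\<forall>x\<in>\<Omega>. s x \<le> v x)"
    by (elim bexE conjE)
  then show ?thesis using that by (simp add: ball_simps)
qed


lemma Afun_int:
  assumes "f \<in> Afun \<Omega>" "x \<in> \<Omega>"
  shows "f x = {Inf (f x) .. Sup (f x)} \<and> Inf (f x) \<le> Sup (f x)"
proof -
  from assms obtain a b where "f x = {a..b}" "a \<le> b" by (auto simp: Afun_def IRbar_def)
  then show ?thesis by simp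
qed

lemma Inf_Un_image: "Inf {z. \<exists>y\<in>S. z \<in> F y} = (INF y\<in>S. Inf (F y :: ereal set))"
proof (rule antisym)
  show "Inf {z. \<exists>y\<in>S. z \<in> F y} \<le> (INF y\<in>S. Inf (F y))"
    by (rule INF_greatest, rule Inf_greatest) (auto intro: Inf_lower)
  show "(INF y\<in>S. Inf (F y)) \<le> Inf {z. \<exists>y\<in>S. z \<in> F y}"
    by (rule Inf_greatest) (auto intro: INF_lower2 Inf_lower)
qed

lemma Sup_Un_image: "Sup {z. \<exists>y\<in>S. z \<in> F y} = (SUP y\<in>S. Sup (F y :: ereal set))"
proof (rule antisym)
  show "(SUP y\<in>S. Sup (F y)) \<le> Sup {z. \<exists>y\<in>S. z \<in> F y}"
    by (rule SUP_least, rule Sup_least) (auto intro: Sup_upper)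
  show "Sup {z. \<exists>y\<in>S. z \<in> F y} \<le> (SUP y\<in>S. Sup (F y))"
    by (rule Sup_least) (auto intro: SUP_upper2 Sup_upper)
qed

lemma Ilow_eq: "Ilow D \<Omega> f x = lo \<Omega> D (\<lambda>y. Inf (f y)) x"
  unfolding Ilow_def lo_def Inf_Un_image ..

lemma Supp_eq: "Supp D \<Omega> f x = hi \<Omega> D (\<lambda>y. Sup (f y)) x"
  unfolding Supp_def hi_def Sup_Un_image ..

lemma G_iff: "f \<in> Gset \<Omega> \<longleftrightarrow> f \<in> Afun \<Omega> \<and> (\<lambda>y. Inf (f y)) \<in> Lset \<Omega> \<and> (\<lambda>y. Sup (f y)) \<in> Uset \<Omega>"
proof (cases "f \<in> Afun \<Omega>")
  case True
  have "\<And>D x. x \<in> \<Omega> \<Longrightarrow> (Fenv D \<Omega> f x = f x) \<longleftrightarrow>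
      (lo \<Omega> D (\<lambda>y. Inf (f y)) x = Inf (f x) \<and> hi \<Omega> D (\<lambda>y. Sup (f y)) x = Sup (f x))"
  proof -
    fix D x assume x: "x \<in> \<Omega>"
    from Afun_int[OF True x] have fx: "f x = {Inf (f x) .. Sup (f x)}" and le: "Inf (f x) \<le> Sup (f x)" by auto
    show "(Fenv D \<Omega> f x = f x) \<longleftrightarrow>
      (lo \<Omega> D (\<lambda>y. Inf (f y)) x = Inf (f x) \<and> hi \<Omega> D (\<lambda>y. Sup (f y)) x = Sup (f x))"
      unfolding Fenv_def Ilow_eq Supp_eq using le by (subst fx) auto
  qed
  then show ?thesis using True
    by (auto simp: Gset_def D_continuous_def Lset_def Uset_def)
qed (auto simp: Gset_def)

definition mk :: "'a set \<Rightarrow> ('a \<Rightarrow> ereal) \<Rightarrow> ('a \<Rightarrow> ereal) \<Rightarrow> 'a \<Rightarrow> ereal set" where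
  "mk \<Omega> a b = (\<lambda>x. if x \<in> \<Omega> then {a x .. b x} else {})"

lemma mk_G:
  assumes le: "\<And>x. x \<in> \<Omega> \<Longrightarrow> a x \<le> b x" and a: "a \<in> Lset \<Omega>" and b: "b \<in> Uset \<Omega>"
  shows "mk \<Omega> a b \<in> Gset \<Omega>"
  unfolding G_iff
proof (intro conjI)
  show "mk \<Omega> a b \<in> Afun \<Omega>" using le by (auto simp: Afun_def IRbar_def mk_def)
  show "(\<lambda>y. Inf (mk \<Omega> a b y)) \<in> Lset \<Omega>" by (rule L_cong[OF a]) (simp add: mk_def le)
  show "(\<lambda>y. Sup (mk \<Omega> a b y)) \<in> Uset \<Omega>" by (rule U_cong[OF b]) (simp add: mk_def le)
qed

lemma mk_Inf: "x \<in> \<Omega> \<Longrightarrow> a x \<le> b x \<Longrightarrow> Inf (mk \<Omega> a b x) = a x"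
  by (simp add: mk_def)
lemma mk_Sup: "x \<in> \<Omega> \<Longrightarrow> a x \<le> b x \<Longrightarrow> Sup (mk \<Omega> a b x) = b x"
  by (simp add: mk_def)

lemma incl_iff:
  assumes "f \<in> Afun \<Omega>" "g \<in> Afun \<Omega>"
  shows "incl \<Omega> f g \<longleftrightarrow> (\<forall>x\<in>\<Omega>. Inf (g x) \<le> Inf (f x) \<and> Sup (f x) \<le> Sup (g x))"
  unfolding incl_def
proof (intro ball_cong refl)
  fix x assume x: "x \<in> \<Omega>"
  from Afun_int[OF assms(1) x] Afun_int[OF assms(2) x]
  show "f x \<subseteq> g x \<longleftrightarrow> Inf (g x) \<le> Inf (f x) \<and> Sup (f x) \<le> Sup (g x)"
    by (metis atLeastatMost_subset_iff not_le)
qed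

lemma G_Afun: "f \<in> Gset \<Omega> \<Longrightarrow> f \<in> Afun \<Omega>"
  by (simp add: Gset_def)


lemma S_facts:
  assumes "S \<subseteq> Gset \<Omega>" "f \<in> S"
  shows "f \<in> Afun \<Omega>" "(\<lambda>y. Inf (f y)) \<in> Lset \<Omega>" "(\<lambda>y. Sup (f y)) \<in> Uset \<Omega>"
  using assms G_iff[of f \<Omega>] by auto

lemma dc_sup:
  assumes SG: "S \<subseteq> Gset \<Omega>"
    and conv: "\<And>g h. g \<in> S \<Longrightarrow> h \<in> Gset \<Omega> \<Longrightarrow> incl \<Omega> h g \<Longrightarrow> h \<in> S"
    and AS: "A \<subseteq> S" and a0: "a0 \<in> A" and uS: "u \<in> S" and ub: "\<And>a. a \<in> A \<Longrightarrow> incl \<Omega> a u"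
  shows "\<exists>s. is_sup_in S (incl \<Omega>) A s"
proof -
  have AA: "\<And>a. a \<in> A \<Longrightarrow> a \<in> S" using AS by blast
  obtain sl where sl: "sl \<in> Lset \<Omega>"
    and sl1: "\<And>a x. a \<in> A \<Longrightarrow> x \<in> \<Omega> \<Longrightarrow> sl x \<le> Inf (a x)"
    and sl2: "\<And>v x. v \<in> Lset \<Omega> \<Longrightarrow> (\<And>a x. a \<in> A \<Longrightarrow> x \<in> \<Omega> \<Longrightarrow> v x \<le> Inf (a x)) \<Longrightarrow> x \<in> \<Omega> \<Longrightarrow> v x \<le> sl x"
    using L_inf_img[of A "\<lambda>f y. Inf (f y)" \<Omega>] S_facts(2)[OF SG AA] by metis
  obtain su where su: "su \<in> Uset \<Omega>"
    and su1: "\<And>a x. a \<in> A \<Longrightarrow> x \<in> \<Omega> \<Longrightarrow> Sup (a x) \<le> su x"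
    and su2: "\<And>v x. v \<in> Uset \<Omega> \<Longrightarrow> (\<And>a x. a \<in> A \<Longrightarrow> x \<in> \<Omega> \<Longrightarrow> Sup (a x) \<le> v x) \<Longrightarrow> x \<in> \<Omega> \<Longrightarrow> su x \<le> v x"
    using U_sup_img[of A "\<lambda>f y. Sup (f y)" \<Omega>] S_facts(3)[OF SG AA] by metis
  have le: "\<And>x. x \<in> \<Omega> \<Longrightarrow> sl x \<le> su x"
  proof -
    fix x assume x: "x \<in> \<Omega>"
    have "Inf (a0 x) \<le> Sup (a0 x)" using Afun_int[OF S_facts(1)[OF SG AA[OF a0]] x] by blast
    then show "sl x \<le> su x" using sl1[OF a0 x] su1[OF a0 x] by (meson order_trans)
  qed
  let ?s = "mk \<Omega> sl su"
  have sG: "?s \<in> Gset \<Omega>" by (rule mk_G[OF le sl su])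
  have sA: "?s \<in> Afun \<Omega>" using sG G_Afun by auto
  have isw: "incl \<Omega> ?s w" if wS: "w \<in> S" and wb: "\<And>a. a \<in> A \<Longrightarrow> incl \<Omega> a w" for w
  proof -
    have wA: "w \<in> Afun \<Omega>" by (rule S_facts(1)[OF SG wS])
    have c1: "Inf (w x) \<le> Inf (a x)" and c2: "Sup (a x) \<le> Sup (w x)" if "a \<in> A" "x \<in> \<Omega>" for a x
      using wb[OF that(1)] that incl_iff[OF S_facts(1)[OF SG AA[OF that(1)]] wA] by auto
    have "Inf (w x) \<le> sl x" if "x \<in> \<Omega>" for x using sl2[of "\<lambda>y. Inf (w y)" x] S_facts(2)[OF SG wS] c1 that by blast
    moreover have "su x \<le> Sup (w x)" if "x \<in> \<Omega>" for x using su2[of "\<lambda>y. Sup (w y)" x] S_facts(3)[OF SG wS] c2 that by blast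
    ultimately show "incl \<Omega> ?s w" unfolding incl_iff[OF sA wA] using le by (auto simp: mk_def le)
  qed
  have "?s \<in> S" by (rule conv[OF uS sG isw[OF uS ub]])
  moreover have "incl \<Omega> a ?s" if a: "a \<in> A" for a
    unfolding incl_iff[OF S_facts(1)[OF SG AA[OF a]] sA] using le sl1[OF a] su1[OF a] by (auto simp: mk_def le)
  ultimately show ?thesis unfolding is_sup_in_def using isw by blast
qed

lemma dc_inf:
  assumes SG: "S \<subseteq> Gset \<Omega>"
    and conv: "\<And>g h. g \<in> S \<Longrightarrow> h \<in> Gset \<Omega> \<Longrightarrow> incl \<Omega> h g \<Longrightarrow> h \<in> S"
    and AS: "A \<subseteq> S" and a0: "a0 \<in> A" and lS: "l \<in> S" and lb: "\<And>a. a \<in> A \<Longrightarrow> incl \<Omega> l a"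
  shows "\<exists>s. is_inf_in S (incl \<Omega>) A s"
proof -
  have AA: "\<And>a. a \<in> A \<Longrightarrow> a \<in> S" using AS by blast
  obtain sl where sl: "sl \<in> Lset \<Omega>"
    and sl1: "\<And>a x. a \<in> A \<Longrightarrow> x \<in> \<Omega> \<Longrightarrow> Inf (a x) \<le> sl x"
    and sl2: "\<And>v x. v \<in> Lset \<Omega> \<Longrightarrow> (\<And>a x. a \<in> A \<Longrightarrow> x \<in> \<Omega> \<Longrightarrow> Inf (a x) \<le> v x) \<Longrightarrow> x \<in> \<Omega> \<Longrightarrow> sl x \<le> v x"
    using L_sup_img[of A "\<lambda>f y. Inf (f y)" \<Omega>] S_facts(2)[OF SG AA] by metis
  obtain su where su: "su \<in> Uset \<Omega>"
    and su1: "\<And>a x. a \<in> A \<Longrightarrow> x \<in> \<Omega> \<Longrightarrow> su x \<le> Sup (a x)"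
    and su2: "\<And>v x. v \<in> Uset \<Omega> \<Longrightarrow> (\<And>a x. a \<in> A \<Longrightarrow> x \<in> \<Omega> \<Longrightarrow> v x \<le> Sup (a x)) \<Longrightarrow> x \<in> \<Omega> \<Longrightarrow> v x \<le> su x"
    using U_inf_img[of A "\<lambda>f y. Sup (f y)" \<Omega>] S_facts(3)[OF SG AA] by metis
  have isw: "Inf (w x) \<ge> sl x \<and> Sup (w x) \<le> su x"
    if wS: "w \<in> S" and wb: "\<And>a. a \<in> A \<Longrightarrow> incl \<Omega> w a" and x: "x \<in> \<Omega>" for w x
  proof -
    have wA: "w \<in> Afun \<Omega>" by (rule S_facts(1)[OF SG wS])
    have c1: "Inf (a x) \<le> Inf (w x)" and c2: "Sup (w x) \<le> Sup (a x)" if "a \<in> A" "x \<in> \<Omega>" for a x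
      using wb[OF that(1)] that incl_iff[OF wA S_facts(1)[OF SG AA[OF that(1)]]] by auto
    have "sl x \<le> Inf (w x)" using sl2[of "\<lambda>y. Inf (w y)" x] S_facts(2)[OF SG wS] c1 x by blast
    moreover have "Sup (w x) \<le> su x" using su2[of "\<lambda>y. Sup (w y)" x] S_facts(3)[OF SG wS] c2 x by blast
    ultimately show ?thesis by simp
  qed
  have le: "\<And>x. x \<in> \<Omega> \<Longrightarrow> sl x \<le> su x"
  proof -
    fix x assume x: "x \<in> \<Omega>"
    have "Inf (l x) \<le> Sup (l x)" using Afun_int[OF S_facts(1)[OF SG lS] x] by blast
    then show "sl x \<le> su x" using isw[OF lS lb x] by (meson order_trans)
  qed
  let ?s = "mk \<Omega> sl su"
  have sG: "?s \<in> Gset \<Omega>" by (rule mk_G[OF le sl su])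
  have sA: "?s \<in> Afun \<Omega>" using sG G_Afun by auto
  have isa: "incl \<Omega> ?s a" if a: "a \<in> A" for a
    unfolding incl_iff[OF sA S_facts(1)[OF SG AA[OF a]]] using le sl1[OF a] su1[OF a] by (auto simp: mk_def le)
  have "?s \<in> S" by (rule conv[OF AA[OF a0] sG isa[OF a0]])
  moreover have "incl \<Omega> w ?s" if wS: "w \<in> S" and wb: "\<forall>a\<in>A. incl \<Omega> w a" for w
    unfolding incl_iff[OF S_facts(1)[OF SG wS] sA] using le isw[OF wS] wb by (auto simp: mk_def le)
  ultimately show ?thesis unfolding is_inf_in_def using isa by blast
qed

lemma dc_generic:
  assumes SG: "S \<subseteq> Gset \<Omega>"
    and conv: "\<And>g h. g \<in> S \<Longrightarrow> h \<in> Gset \<Omega> \<Longrightarrow> incl \<Omega> h g \<Longrightarrow> h \<in> S"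
  shows "dedekind_complete S (incl \<Omega>)"
  unfolding dedekind_complete_def
proof (intro conjI allI impI)
  fix A assume "A \<subseteq> S \<and> A \<noteq> {} \<and> (\<exists>u\<in>S. \<forall>a\<in>A. incl \<Omega> a u)"
  then obtain u a0 where f: "A \<subseteq> S" "a0 \<in> A" "u \<in> S" "\<And>a. a \<in> A \<Longrightarrow> incl \<Omega> a u" by blast
  show "\<exists>s. is_sup_in S (incl \<Omega>) A s"
    by (rule dc_sup[of S \<Omega> A a0 u]) (use SG f in \<open>auto intro: conv\<close>)
next
  fix A assume "A \<subseteq> S \<and> A \<noteq> {} \<and> (\<exists>l\<in>S. \<forall>a\<in>A. incl \<Omega> l a)"
  then obtain l a0 where f: "A \<subseteq> S" "a0 \<in> A" "l \<in> S" "\<And>a. a \<in> A \<Longrightarrow> incl \<Omega> l a" by blast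
  show "\<exists>s. is_inf_in S (incl \<Omega>) A s"
    by (rule dc_inf[of S \<Omega> A a0 l]) (use SG f in \<open>auto intro: conv\<close>)
qed


lemma ereal_between: "ereal a \<le> (y::ereal) \<Longrightarrow> y \<le> ereal b \<Longrightarrow> \<exists>r. y = ereal r"
  by (cases y) auto

lemma finite_ifun_sub:
  assumes g: "finite_ifun E g" and EO: "E \<subseteq> \<Omega>" and h: "h \<in> Afun \<Omega>" and sub: "\<And>x. x \<in> E \<Longrightarrow> h x \<subseteq> g x"
  shows "finite_ifun E h"
  unfolding finite_ifun_def
proof
  fix x assume x: "x \<in> E"
  obtain a b where gx: "g x = {ereal a..ereal b}" using g x unfolding finite_ifun_def by blast
  obtain p q where hx: "h x = {p..q}" and le: "p \<le> q"
    using h x EO unfolding Afun_def IRbar_def by blast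
  have "p \<in> h x" "q \<in> h x" unfolding hx using le by auto
  then have "p \<in> g x" "q \<in> g x" using sub[OF x] by auto
  then have "ereal a \<le> p" "p \<le> ereal b" "ereal a \<le> q" "q \<le> ereal b"
    unfolding gx by auto
  then obtain p' q' where p: "p = ereal p'" and q: "q = ereal q'"
    using ereal_between by meson
  show "\<exists>a b. a \<le> b \<and> h x = {ereal a..ereal b}"
    using hx le p q by (intro exI[of _ p'] exI[of _ q']) auto
qed

theorem theorem16:
  fixes \<Omega> :: "'a::euclidean_space set"
  assumes "open \<Omega>"
  shows "dedekind_complete (Gbd \<Omega>) (incl \<Omega>) \<and> dedekind_complete (Gft \<Omega>) (incl \<Omega>)
       \<and> dedekind_complete (Gnf \<Omega>) (incl \<Omega>) \<and> dedekind_complete (Gset \<Omega>) (incl \<Omega>)"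
proof (intro conjI)
  show "dedekind_complete (Gbd \<Omega>) (incl \<Omega>)"
  proof (rule dc_generic)
    show "Gbd \<Omega> \<subseteq> Gset \<Omega>" by (auto simp: Gbd_def)
    fix g h assume g: "g \<in> Gbd \<Omega>" and h: "h \<in> Gset \<Omega>" and i: "incl \<Omega> h g"
    from g obtain M :: real where M: "\<forall>x\<in>\<Omega>. g x \<subseteq> {ereal (-M) .. ereal M}"
      by (auto simp: Gbd_def bounded_ifun_def)
    have "\<forall>x\<in>\<Omega>. h x \<subseteq> {ereal (-M) .. ereal M}" using M i unfolding incl_def by blast
    then show "h \<in> Gbd \<Omega>" using h by (auto simp: Gbd_def bounded_ifun_def)
  qed
  show "dedekind_complete (Gft \<Omega>) (incl \<Omega>)"
  proof (rule dc_generic)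
    show "Gft \<Omega> \<subseteq> Gset \<Omega>" by (auto simp: Gft_def)
    fix g h assume g: "g \<in> Gft \<Omega>" and h: "h \<in> Gset \<Omega>" and i: "incl \<Omega> h g"
    have "finite_ifun \<Omega> h"
      by (rule finite_ifun_sub[of \<Omega> g \<Omega> h]) (use g h i in \<open>auto simp: Gft_def Gset_def incl_def\<close>)
    then show "h \<in> Gft \<Omega>" using h by (auto simp: Gft_def)
  qed
  show "dedekind_complete (Gnf \<Omega>) (incl \<Omega>)"
  proof (rule dc_generic)
    show "Gnf \<Omega> \<subseteq> Gset \<Omega>" by (auto simp: Gnf_def)
    fix g h assume g: "g \<in> Gnf \<Omega>" and h: "h \<in> Gset \<Omega>" and i: "incl \<Omega> h g"
    from g obtain D where D: "open D" "denseIn D \<Omega>" "finite_ifun D g"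
      by (auto simp: Gnf_def nearly_finite_ifun_def)
    have DO: "D \<subseteq> \<Omega>" using D(2) by (simp add: denseIn_def)
    have "finite_ifun D h"
      by (rule finite_ifun_sub[OF D(3) DO]) (use h i DO in \<open>auto simp: Gset_def incl_def\<close>)
    then show "h \<in> Gnf \<Omega>" using h D by (auto simp: Gnf_def nearly_finite_ifun_def)
  qed
  show "dedekind_complete (Gset \<Omega>) (incl \<Omega>)"
    by (rule dc_generic) auto
qed

end
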